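(* Let $\mathfrak n=\mathfrak v\oplus\mathfrak z$ be a Lie algebra of Heisenberg type and let $\mathcal L\subset\mathfrak v$ be a Lagrangian subspace. Then $\mathcal L^\perp$ (orthogonal complement in $\mathfrak v$) is also Lagrangian, $\mathfrak v=\mathcal L\oplus\mathcal L^\perp$, and $J_z(\mathcal L)=\mathcal L^\perp$ for every non-zero $z\in\mathfrak z$.
   Context: Lie algebra of Heisenberg type: $\mathfrak z=\mathbb R^m$ with standard inner product $\langle\cdot,\cdot\rangle$; $\mathfrak v$ is a finite-dimensional real module over the Clifford algebra $C(m)$ (relations $z^2=-\langle z,z\rangle 1$) with an inner product $(\cdot,\cdot)$ for which each $J_z$ (action of $z$) is skew-symmetric; $\mathfrak n=\mathfrak v\oplus\mathfrak z$ has $\mathfrak z$ central and bracket on $\mathfrak v$ defined by $\langle z,[u,v]\rangle=(J_zu,v)$. A Lagrangian subspace is a subspace $\mathcal L\subset\mathfrak v$ with $[\mathcal L,\mathcal L]=0$ and $\dim\mathcal L=\tfrac12\dim\mathfrak v$. *)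

theory Defs
  imports "HOL-Analysis.Analysis"
begin

text \<open>Heisenberg-type data: \<open>J z\<close> is the action of \<open>z \<in> \<zz>\<close> on the Clifford module \<open>\<vv>\<close>.
  A real C(m)-module structure is the same as a linear map \<open>z \<mapsto> J z\<close> into End(\<vv>)
  with \<open>J z \<circ> J z = -\<langle>z,z\<rangle> id\<close> (universal property of the Clifford algebra).\<close>
definition heisenberg_type :: "('z::euclidean_space \<Rightarrow> 'v::euclidean_space \<Rightarrow> 'v) \<Rightarrow> bool" where
  "heisenberg_type J \<longleftrightarrow>
     (\<forall>u. linear (\<lambda>z. J z u)) \<and>
     (\<forall>z. linear (J z)) \<and>
     (\<forall>z u. J z (J z u) = - (z \<bullet> z) *\<^sub>R u) \<and>
     (\<forall>z u v. J z u \<bullet> v = - (u \<bullet> J z v))"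

text \<open>The bracket \<open>[u,v] \<in> \<zz>\<close>, characterised by \<open>\<langle>z,[u,v]\<rangle> = (J z u, v)\<close>,
  written in an orthonormal basis of \<open>\<zz>\<close>.\<close>
definition htbracket :: "('z::euclidean_space \<Rightarrow> 'v::euclidean_space \<Rightarrow> 'v) \<Rightarrow> 'v \<Rightarrow> 'v \<Rightarrow> 'z" where
  "htbracket J u v = (\<Sum>b\<in>Basis. (J b u \<bullet> v) *\<^sub>R b)"

definition lagrangian :: "('z::euclidean_space \<Rightarrow> 'v::euclidean_space \<Rightarrow> 'v) \<Rightarrow> 'v set \<Rightarrow> bool" where
  "lagrangian J L \<longleftrightarrow> subspace L \<and> (\<forall>u\<in>L. \<forall>v\<in>L. htbracket J u v = 0) \<and>
     2 * dim L = DIM('v)"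

end

theory Submission
  imports Defs
begin

lemma htbracket_zero_iff:
  fixes J :: "'z::euclidean_space \<Rightarrow> 'v::euclidean_space \<Rightarrow> 'v"
  assumes "heisenberg_type J"
  shows "htbracket J u v = 0 \<longleftrightarrow> (\<forall>z. J z u \<bullet> v = 0)"
proof
  assume h: "htbracket J u v = 0"
  have b: "J b u \<bullet> v = 0" if "b \<in> Basis" for b
  proof -
    have "htbracket J u v \<bullet> b = J b u \<bullet> v"
      unfolding htbracket_def using that
      by (simp add: inner_sum_left inner_Basis if_distrib cong: if_cong)
    with h show ?thesis by simp
  qed
  show "\<forall>z. J z u \<bullet> v = 0"
  proof
    fix z :: 'z
    have lin: "linear (\<lambda>z. J z u)" using assms unfolding heisenberg_type_def by blast
    have "J z u = J (\<Sum>b\<in>Basis. (z \<bullet> b) *\<^sub>R b) u" by (simp add: euclidean_representation)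
    also have "\<dots> = (\<Sum>b\<in>Basis. (z \<bullet> b) *\<^sub>R J b u)"
      using linear_sum[OF lin, of "\<lambda>b. (z \<bullet> b) *\<^sub>R b" Basis] linear_scale[OF lin] by simp
    finally show "J z u \<bullet> v = 0" by (simp add: inner_sum_left b)
  qed
next
  assume "\<forall>z. J z u \<bullet> v = 0"
  then show "htbracket J u v = 0" unfolding htbracket_def by simp
qed

theorem proposition4p1:
  fixes J :: "'z::euclidean_space \<Rightarrow> 'v::euclidean_space \<Rightarrow> 'v"
    and L :: "'v set"
  assumes "heisenberg_type J"
    and "lagrangian J L"
  shows "lagrangian J (orthogonal_comp L)
    \<and> L \<inter> orthogonal_comp L = {0}
    \<and> {x + y | x y. x \<in> L \<and> y \<in> orthogonal_comp L} = UNIV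
    \<and> (\<forall>z. z \<noteq> 0 \<longrightarrow> J z ` L = orthogonal_comp L)"
proof -
  have subL: "subspace L" and iso: "\<And>u v. u \<in> L \<Longrightarrow> v \<in> L \<Longrightarrow> htbracket J u v = 0"
    and dL: "2 * dim L = DIM('v)" using assms(2) unfolding lagrangian_def by auto
  have linJ: "\<And>z. linear (J z)" and JJ: "\<And>z u. J z (J z u) = - (z \<bullet> z) *\<^sub>R u"
    and skew: "\<And>z u v. J z u \<bullet> v = - (u \<bullet> J z v)"
    using assms(1) unfolding heisenberg_type_def by auto
  have iso2: "J z u \<bullet> v = 0" if "u \<in> L" "v \<in> L" for z u v
    using iso[OF that] htbracket_zero_iff[OF assms(1)] by blast
  have subC: "subspace (orthogonal_comp L)" by (rule subspace_orthogonal_comp)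
  have "dim {y \<in> UNIV. \<forall>x \<in> L. orthogonal x y} + dim L = dim (UNIV :: 'v set)"
    by (rule dim_subspace_orthogonal_to_vectors) (use subL in auto)
  moreover have "{y \<in> UNIV. \<forall>x \<in> L. orthogonal x y} = orthogonal_comp L"
    unfolding orthogonal_comp_def by auto
  ultimately have dC: "dim (orthogonal_comp L) = dim L" using dL by (simp add: dim_UNIV)
  have img: "J z ` L = orthogonal_comp L" if "z \<noteq> 0" for z
  proof (rule subspace_dim_equal)
    show "subspace (J z ` L)" using linear_subspace_image[OF linJ subL] .
    show "subspace (orthogonal_comp L)" by (rule subC)
    show "J z ` L \<subseteq> orthogonal_comp L"
    proof
      fix x assume "x \<in> J z ` L"
      then obtain a where a: "a \<in> L" "x = J z a" by auto
      have "y \<bullet> x = 0" if "y \<in> L" for y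
        using iso2[OF a(1) that, of z] a(2) by (simp add: inner_commute)
      then show "x \<in> orthogonal_comp L" unfolding orthogonal_comp_def orthogonal_def by auto
    qed
    have "inj (J z)"
    proof (rule injI)
      fix a b assume "J z a = J z b"
      then have "J z (J z a) = J z (J z b)" by simp
      then have "(z \<bullet> z) *\<^sub>R a = (z \<bullet> z) *\<^sub>R b" by (simp add: JJ)
      then show "a = b" using that by simp
    qed
    then have "dim (J z ` L) = dim L"
      using dim_image_eq[OF linJ[of z]] by (simp add: inj_on_def)
    then show "dim (orthogonal_comp L) \<le> dim (J z ` L)" using dC by simp
  qed
  obtain z0 :: 'z where z0: "z0 \<noteq> 0"
    using nonzero_Basis SOME_Basis by blast
  have isoC: "htbracket J u v = 0" if "u \<in> orthogonal_comp L" "v \<in> orthogonal_comp L" for u v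
  proof -
    have "J z u \<bullet> v = 0" for z
    proof (cases "z = 0")
      case True
      then have "J z u = 0"
        using linear_0[OF assms(1)[unfolded heisenberg_type_def, THEN conjunct1, rule_format, of u]]
        by simp
      then show ?thesis by simp
    next
      case False
      from that(1) img[OF False] obtain a where a: "a \<in> L" "u = J z a" by auto
      have "J z u = - (z \<bullet> z) *\<^sub>R a" using a JJ by simp
      moreover have "a \<bullet> v = 0" using that(2) a(1)
        unfolding orthogonal_comp_def orthogonal_def by auto
      ultimately show ?thesis by simp
    qed
    then show ?thesis using htbracket_zero_iff[OF assms(1)] by blast
  qed
  have "lagrangian J (orthogonal_comp L)"
    unfolding lagrangian_def using subC isoC dC dL by auto
  moreover have "L \<inter> orthogonal_comp L = {0}" by (rule orthogonal_Int_0[OF subL])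
  moreover have "{x + y | x y. x \<in> L \<and> y \<in> orthogonal_comp L} = UNIV"
  proof -
    have "x \<in> {x + y | x y. x \<in> L \<and> y \<in> orthogonal_comp L}" for x
    proof -
      have "x \<in> L + orthogonal_comp L" using subspace_sum_orthogonal_comp[OF subL] by simp
      then obtain a b where "a \<in> L" "b \<in> orthogonal_comp L" "x = a + b" by (meson set_plus_elim)
      then show ?thesis by blast
    qed
    then show ?thesis by blast
  qed
  ultimately show ?thesis using img by blast
qed

end
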